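(* Let $A, B, P$ be points in the Euclidean plane and $r>0$ a number with $|AP|>r$ and $|BP|>r$. Consider the maximum angle problem: find a point $P^*$ with $|PP^*|=r$ maximizing the angle $\angle AP^*B\in[0,\pi]$. This problem can be solved using a quadratic equation; that is, a maximizing point $P^*$ exists and its coordinates can be obtained from the coordinates of $A$, $B$, $P$ and from $r$ by finitely many field operations and square roots.
   Context: Here $\angle AQB\in[0,\pi]$ denotes the non-reflex angle at $Q$ between rays $QA$ and $QB$. *)

theory Defs
  imports "HOL-Analysis.Analysis"
begin

text \<open>Points of the Euclidean plane are modelled as complex numbers; the coordinates
of a point z are Re z and Im z.\<close>

definition pangle :: "complex \<Rightarrow> complex \<Rightarrow> complex \<Rightarrow> real" where
  "pangle A Q B = arccos (inner (A - Q) (B - Q) / (norm (A - Q) * norm (B - Q)))"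

inductive_set sqrt_closure :: "real set \<Rightarrow> real set" for S :: "real set" where
  base: "x \<in> S \<Longrightarrow> x \<in> sqrt_closure S"
| zero: "0 \<in> sqrt_closure S"
| one: "1 \<in> sqrt_closure S"
| add: "x \<in> sqrt_closure S \<Longrightarrow> y \<in> sqrt_closure S \<Longrightarrow> x + y \<in> sqrt_closure S"
| neg: "x \<in> sqrt_closure S \<Longrightarrow> - x \<in> sqrt_closure S"
| mult: "x \<in> sqrt_closure S \<Longrightarrow> y \<in> sqrt_closure S \<Longrightarrow> x * y \<in> sqrt_closure S"
| inv: "x \<in> sqrt_closure S \<Longrightarrow> x \<noteq> 0 \<Longrightarrow> inverse x \<in> sqrt_closure S"
| sqrt: "x \<in> sqrt_closure S \<Longrightarrow> x \<ge> 0 \<Longrightarrow> sqrt x \<in> sqrt_closure S"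

end

theory Submission
  imports Defs
begin

lemma sc_diff: "x \<in> sqrt_closure S \<Longrightarrow> y \<in> sqrt_closure S \<Longrightarrow> x - y \<in> sqrt_closure S"
  using sqrt_closure.add[OF _ sqrt_closure.neg] by (metis diff_conv_add_uminus)

lemma sc_divide: "x \<in> sqrt_closure S \<Longrightarrow> y \<in> sqrt_closure S \<Longrightarrow> x / y \<in> sqrt_closure S"
proof (cases "y = 0")
  case True then show ?thesis by (simp add: sqrt_closure.zero)
next
  case False
  assume "x \<in> sqrt_closure S" "y \<in> sqrt_closure S"
  then show ?thesis using False sqrt_closure.mult sqrt_closure.inv by (metis divide_inverse)
qed

lemma sc_pow2: "x \<in> sqrt_closure S \<Longrightarrow> x^2 \<in> sqrt_closure S"
  by (simp add: power2_eq_square sqrt_closure.mult)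

definition CF :: "real set \<Rightarrow> complex \<Rightarrow> bool" where
  "CF S z \<longleftrightarrow> Re z \<in> sqrt_closure S \<and> Im z \<in> sqrt_closure S"

lemma CF_add: "CF S x \<Longrightarrow> CF S y \<Longrightarrow> CF S (x + y)"
  by (simp add: CF_def sqrt_closure.add)
lemma CF_diff: "CF S x \<Longrightarrow> CF S y \<Longrightarrow> CF S (x - y)"
  by (simp add: CF_def sc_diff)
lemma CF_mult: "CF S x \<Longrightarrow> CF S y \<Longrightarrow> CF S (x * y)"
  by (simp add: CF_def sc_diff sqrt_closure.mult sqrt_closure.add)
lemma CF_cnj: "CF S x \<Longrightarrow> CF S (cnj x)"
  by (simp add: CF_def sqrt_closure.neg)
lemma CF_of_real: "x \<in> sqrt_closure S \<Longrightarrow> CF S (complex_of_real x)"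
  by (simp add: CF_def sqrt_closure.zero)
lemma CF_one: "CF S 1"
  by (simp add: CF_def sqrt_closure.zero sqrt_closure.one)
lemma CF_divide: "CF S x \<Longrightarrow> CF S y \<Longrightarrow> CF S (x / y)"
  unfolding CF_def Re_divide Im_divide
  by (intro conjI sc_divide sc_diff sqrt_closure.add sqrt_closure.mult sc_pow2; simp)
lemma CF_cmod2: "CF S x \<Longrightarrow> (cmod x)^2 \<in> sqrt_closure S"
  unfolding CF_def cmod_power2 by (simp add: sc_pow2 sqrt_closure.add)


lemma onG_pos:
  fixes d R y1 y2 :: real
  assumes "(y1 - d)^2 + y2^2 = R^2" "d > 0" "0 \<le> R" "R < d"
  shows "y1 > 0"
proof -
  have "(y1 - d)^2 \<le> R^2" using assms(1) by (smt (verit) zero_le_power2)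
  hence "\<bar>y1 - d\<bar> \<le> R" using assms(3) by (metis abs_of_nonneg power2_le_iff_abs_le)
  thus ?thesis using assms by linarith
qed

lemma onG_sq:
  fixes d R y1 y2 :: real
  assumes "(y1 - d)^2 + y2^2 = R^2"
  shows "d^2 * y2^2 \<le> R^2 * (y1^2 + y2^2)"
proof -
  have "R^2 * (y1^2 + y2^2) - d^2 * y2^2 = (y1^2 + y2^2 - d * y1)^2"
    unfolding assms[symmetric] by (simp add: power2_eq_square algebra_simps)
  thus ?thesis by (smt (verit) zero_le_power2)
qed

lemma cs_bound:
  fixes g1 g2 y1 y2 :: real
  shows "- sqrt (g1^2 + g2^2) * sqrt (y1^2 + y2^2) \<le> g1 * y1 - g2 * y2"
proof -
  have "(g1 * y1 - g2 * y2)^2 \<le> (g1^2 + g2^2) * (y1^2 + y2^2)"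
  proof -
    have "(g1^2 + g2^2) * (y1^2 + y2^2) - (g1 * y1 - g2 * y2)^2 = (g1 * y2 + g2 * y1)^2"
      by (simp add: power2_eq_square algebra_simps)
    thus ?thesis by (smt (verit) zero_le_power2)
  qed
  hence "sqrt ((g1 * y1 - g2 * y2)^2) \<le> sqrt ((g1^2 + g2^2) * (y1^2 + y2^2))"
    using real_sqrt_le_mono by blast
  hence "\<bar>g1 * y1 - g2 * y2\<bar> \<le> sqrt (g1^2 + g2^2) * sqrt (y1^2 + y2^2)"
    by (simp add: real_sqrt_mult)
  thus ?thesis by linarith
qed


lemma core_real:
  fixes d R g1 g2 :: real
  assumes d: "d > 0" and R: "0 \<le> R" "R < d" and g: "g1^2 + g2^2 > 0"
    and mem: "d \<in> sqrt_closure S" "R \<in> sqrt_closure S" "g1 \<in> sqrt_closure S" "g2 \<in> sqrt_closure S"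
  shows "\<exists>v1 v2. (v1 - d)^2 + v2^2 = R^2 \<and> v1 \<in> sqrt_closure S \<and> v2 \<in> sqrt_closure S \<and>
     (\<forall>y1 y2. (y1 - d)^2 + y2^2 = R^2 \<longrightarrow>
        (g1* v1 - g2* v2) / sqrt (v1^2+v2^2) \<le> (g1*y1 - g2*y2) / sqrt (y1^2+y2^2))"
proof (cases "g1 < 0 \<and> d^2*g2^2 \<le> R^2*(g1^2+g2^2)")
  case True
  define N where "N = g1^2+g2^2"
  have N: "N > 0" using g N_def by simp
  have g1: "g1 < 0" using True by simp
  define s where "s = sqrt (R^2*N - d^2*g2^2)"
  have s2: "s^2 = R^2*N - d^2*g2^2" using True by (simp add: s_def N_def del: real_sqrt_le_iff)
  have s0: "s \<ge> 0" unfolding s_def by (rule real_sqrt_ge_zero) (use True in \<open>simp add: N_def\<close>)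
  have RdN: "R^2 * N < d^2 * N" using R N by (simp add: power_strict_mono)
  have e1: "(-d*g1)^2 = d^2*N - d^2*g2^2" by (simp add: N_def power2_eq_square algebra_simps)
  have "s^2 < (-d*g1)^2" unfolding e1 s2 using RdN by linarith
  moreover have "0 \<le> -d*g1" using d g1 by (simp add: mult_pos_neg less_imp_le)
  ultimately have slt: "s < -d*g1" by (rule power_less_imp_less_base)
  define t where "t = (-d*g1 - s)/N"
  have t0: "t > 0" using slt N by (simp add: t_def)
  have tN: "t * N = -d*g1 - s" using N by (simp add: t_def)
  have "N * (N*t^2 + 2*d*g1*t + d^2 - R^2) = (t*N)^2 + 2*d*g1*(t*N) + N*(d^2 - R^2)"
    by (simp add: power2_eq_square algebra_simps)
  also have "\<dots> = s^2 - d^2*g1^2 + N*d^2 - N*R^2"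
    unfolding tN by (simp add: power2_eq_square algebra_simps)
  also have "\<dots> = 0" unfolding s2 by (simp add: N_def algebra_simps)
  finally have teq: "N*t^2 + 2*d*g1*t + d^2 - R^2 = 0" using N by simp
  define v1 where "v1 = -t*g1"
  define v2 where "v2 = t*g2"
  have onc: "(v1 - d)^2 + v2^2 = R^2"
  proof -
    have "(v1 - d)^2 + v2^2 = N*t^2 + 2*d*g1*t + d^2"
      by (simp add: v1_def v2_def N_def power2_eq_square algebra_simps)
    thus ?thesis using teq by simp
  qed
  have nv: "sqrt (v1^2+v2^2) = t * sqrt N"
  proof -
    have "v1^2+v2^2 = t^2 * N" by (simp add: v1_def v2_def N_def power2_eq_square algebra_simps)
    thus ?thesis using t0 by (simp add: real_sqrt_mult)
  qed
  have val: "(g1* v1 - g2* v2) / sqrt (v1^2+v2^2) = - sqrt N"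
  proof -
    have "g1* v1 - g2* v2 = - t * N" by (simp add: v1_def v2_def N_def power2_eq_square algebra_simps)
    also have "\<dots> = - (t * sqrt N) * sqrt N" using N by (simp add: real_sqrt_mult_self)
    finally show ?thesis unfolding nv using t0 N by simp
  qed
  have memv: "v1 \<in> sqrt_closure S" "v2 \<in> sqrt_closure S"
  proof -
    have "N \<in> sqrt_closure S" unfolding N_def using mem by (simp add: sc_pow2 sqrt_closure.add)
    moreover have "s \<in> sqrt_closure S" unfolding s_def
      using True mem \<open>N \<in> sqrt_closure S\<close>
      by (intro sqrt_closure.sqrt sc_diff sqrt_closure.mult sc_pow2) (auto simp: N_def)
    ultimately have "t \<in> sqrt_closure S" unfolding t_def using mem
      by (intro sc_divide sc_diff sqrt_closure.mult sqrt_closure.neg) auto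
    thus "v1 \<in> sqrt_closure S" "v2 \<in> sqrt_closure S" unfolding v1_def v2_def using mem
      by (auto intro: sqrt_closure.mult sqrt_closure.neg)
  qed
  show ?thesis
  proof (intro exI conjI allI impI)
    show "(v1 - d)^2 + v2^2 = R^2" by (rule onc)
    show "v1 \<in> sqrt_closure S" "v2 \<in> sqrt_closure S" by (rule memv)+
    fix y1 y2 assume y: "(y1 - d)^2 + y2^2 = R^2"
    have "y1 > 0" using onG_pos[OF y d R] .
    hence ny: "sqrt (y1^2+y2^2) > 0" by (intro real_sqrt_gt_zero add_pos_nonneg) auto
    have "- sqrt N * sqrt (y1^2+y2^2) \<le> g1 * y1 - g2 * y2" using cs_bound N_def by simp
    hence "- sqrt N \<le> (g1*y1 - g2*y2) / sqrt (y1^2+y2^2)" using ny by (simp add: pos_le_divide_eq)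
    thus "(g1* v1 - g2* v2) / sqrt (v1^2+v2^2) \<le> (g1*y1 - g2*y2) / sqrt (y1^2+y2^2)"
      unfolding val .
  qed
next
  case False
  define L where "L = sqrt (d^2 - R^2)"
  have dR: "R^2 < d^2" using R by (simp add: power_strict_mono)
  have L2: "L^2 = d^2 - R^2" using dR by (simp add: L_def)
  have L0: "L > 0" using dR by (simp add: L_def)
  define \<sigma> :: real where "\<sigma> = (if g2 \<ge> 0 then 1 else -1)"
  have sg: "\<sigma> * g2 = \<bar>g2\<bar>" "\<sigma>^2 = 1" by (auto simp: \<sigma>_def)
  define v1 where "v1 = L^2/d"
  define v2 where "v2 = \<sigma>*L*R/d"
  have onc: "(v1 - d)^2 + v2^2 = R^2"
  proof -
    have "v1 - d = -(R^2/d)" using d unfolding v1_def L2 by (simp add: field_simps power2_eq_square)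
    hence a1: "(v1 - d)^2 = R^2 * R^2 / d^2" by (simp add: power_divide power2_eq_square)
    have a2: "v2^2 = R^2 * L^2 / d^2" unfolding v2_def using sg
      by (simp add: power_divide power_mult_distrib)
    have "(v1 - d)^2 + v2^2 = R^2 * (R^2 + L^2) / d^2" unfolding a1 a2 by (simp add: add_divide_distrib algebra_simps)
    also have "\<dots> = R^2" using d unfolding L2 by (simp add: field_simps)
    finally show ?thesis .
  qed
  have nv: "sqrt (v1^2+v2^2) = L"
  proof -
    have b1: "v1^2 = L^2 * L^2 / d^2" unfolding v1_def by (simp add: power_divide power2_eq_square)
    have b2: "v2^2 = L^2 * R^2 / d^2" unfolding v2_def using sg
      by (simp add: power_divide power_mult_distrib)
    have "v1^2+v2^2 = L^2 * (L^2 + R^2) / d^2" unfolding b1 b2 by (simp add: add_divide_distrib algebra_simps)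
    also have "\<dots> = L^2" using d unfolding L2 by (simp add: field_simps)
    finally show ?thesis using L0 by simp
  qed
  have val: "(g1* v1 - g2* v2) / sqrt (v1^2+v2^2) = (g1*L - \<bar>g2\<bar>*R)/d"
  proof -
    have "g1* v1 - g2* v2 = L * (g1*L - (\<sigma>*g2)*R)/d" using d unfolding v1_def v2_def
      by (simp add: field_simps power2_eq_square)
    thus ?thesis unfolding nv sg using L0 by simp
  qed
  have memv: "v1 \<in> sqrt_closure S" "v2 \<in> sqrt_closure S"
  proof -
    have Lm: "L \<in> sqrt_closure S" unfolding L_def using dR mem
      by (intro sqrt_closure.sqrt sc_diff sc_pow2) auto
    have "\<sigma> \<in> sqrt_closure S" unfolding \<sigma>_def by (auto intro: sqrt_closure.one sqrt_closure.neg)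
    thus "v1 \<in> sqrt_closure S" "v2 \<in> sqrt_closure S" unfolding v1_def v2_def using mem Lm
      by (auto intro!: sc_divide sqrt_closure.mult sc_pow2)
  qed
  show ?thesis
  proof (intro exI conjI allI impI)
    show "(v1 - d)^2 + v2^2 = R^2" by (rule onc)
    show "v1 \<in> sqrt_closure S" "v2 \<in> sqrt_closure S" by (rule memv)+
    fix y1 y2 assume y: "(y1 - d)^2 + y2^2 = R^2"
    have y1p: "y1 > 0" using onG_pos[OF y d R] .
    define n where "n = sqrt (y1^2+y2^2)"
    have n0: "n > 0" unfolding n_def using y1p by (intro real_sqrt_gt_zero add_pos_nonneg) auto
    have n2: "n^2 = y1^2+y2^2" by (simp add: n_def)
    have sq: "d^2 * y2^2 \<le> R^2 * n^2" using onG_sq[OF y] n2 by simp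
    have Q0: "d * \<bar>y2\<bar> \<le> R * n"
    proof -
      have "(d * \<bar>y2\<bar>)^2 \<le> (R*n)^2" using sq by (simp add: power_mult_distrib)
      thus ?thesis by (rule power2_le_imp_le) (use R n0 in simp)
    qed
    have P0: "L * n \<le> d * y1"
    proof -
      have e1: "(L*n)^2 = d^2*n^2 - R^2*n^2" by (simp add: power_mult_distrib L2 algebra_simps)
      have e2: "(d*y1)^2 = d^2*n^2 - d^2*y2^2" using n2 by (simp add: power_mult_distrib algebra_simps)
      have "(L*n)^2 \<le> (d*y1)^2" unfolding e1 e2 using sq by linarith
      thus ?thesis by (rule power2_le_imp_le) (use d y1p in simp)
    qed
    have key: "g1 * (d*y1 - L*n) + \<bar>g2\<bar> * (R*n - d*\<bar>y2\<bar>) \<ge> 0"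
    proof (cases "g1 \<ge> 0")
      case True
      thus ?thesis by (intro add_nonneg_nonneg mult_nonneg_nonneg) (use True P0 Q0 in auto)
    next
      case g1n: False
      hence "\<not> d^2*g2^2 \<le> R^2*(g1^2+g2^2)" using False by simp
      have e1: "(R*\<bar>g1\<bar>)^2 = R^2*g1^2" by (simp add: power_mult_distrib)
      have e2: "(L*\<bar>g2\<bar>)^2 = d^2*g2^2 - R^2*g2^2" by (simp add: power_mult_distrib L2 algebra_simps)
      have "(R*\<bar>g1\<bar>)^2 < (L*\<bar>g2\<bar>)^2" unfolding e1 e2 using \<open>\<not> d^2*g2^2 \<le> R^2*(g1^2+g2^2)\<close>
        by (simp add: distrib_left)
      hence LR: "R*\<bar>g1\<bar> < L*\<bar>g2\<bar>" by (rule power_less_imp_less_base) (use L0 in simp)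
      define Pp where "Pp = d*y1 - L*n"
      define Qq where "Qq = R*n - d*\<bar>y2\<bar>"
      have Pp0: "Pp \<ge> 0" using P0 by (simp add: Pp_def)
      have Qq0: "Qq \<ge> 0" using Q0 by (simp add: Qq_def)
      have y2a: "\<bar>y2\<bar>^2 = y2^2" by simp
      have ident: "Pp * (d*y1 + L*n) = Qq * (R*n + d*\<bar>y2\<bar>)"
      proof -
        have "Pp * (d*y1 + L*n) = d^2*y1^2 - L^2*n^2" by (simp add: Pp_def power2_eq_square algebra_simps)
        also have "\<dots> = R^2*n^2 - d^2*\<bar>y2\<bar>^2" unfolding L2 y2a n2 by (simp add: algebra_simps)
        also have "\<dots> = Qq * (R*n + d*\<bar>y2\<bar>)" by (simp add: Qq_def power2_eq_square algebra_simps)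
        finally show ?thesis .
      qed
      have A1: "\<bar>g1\<bar> * (d*\<bar>y2\<bar>) \<le> \<bar>g1\<bar> * (R*n)" using mult_left_mono[OF Q0 abs_ge_zero] .
      have A2: "(R*\<bar>g1\<bar>) * n \<le> (L*\<bar>g2\<bar>) * n" using mult_right_mono[OF less_imp_le[OF LR]] n0 by simp
      have A3: "\<bar>g2\<bar> * (L*n) \<le> \<bar>g2\<bar> * (d*y1)" using mult_left_mono[OF P0 abs_ge_zero] .
      have f1: "\<bar>g1\<bar> * (R*n + d*\<bar>y2\<bar>) = \<bar>g1\<bar> * (d*\<bar>y2\<bar>) + (R*\<bar>g1\<bar>) * n" by (simp add: algebra_simps)
      have f2: "\<bar>g2\<bar> * (d*y1 + L*n) = \<bar>g2\<bar> * (d*y1) + (L*\<bar>g2\<bar>) * n" by (simp add: algebra_simps)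
      have f3: "\<bar>g2\<bar> * (L*n) = (L*\<bar>g2\<bar>) * n" "\<bar>g1\<bar> * (R*n) = (R*\<bar>g1\<bar>) * n" by (simp_all add: algebra_simps)
      have B: "\<bar>g1\<bar> * (R*n + d*\<bar>y2\<bar>) \<le> \<bar>g2\<bar> * (d*y1 + L*n)"
        unfolding f1 f2 using A1 A2 A3 unfolding f3 by linarith
      have "(\<bar>g1\<bar> * Pp) * (d*y1 + L*n) \<le> (\<bar>g2\<bar> * Qq) * (d*y1 + L*n)"
      proof -
        have "(\<bar>g1\<bar> * Pp) * (d*y1 + L*n) = \<bar>g1\<bar> * (Pp * (d*y1 + L*n))" by (simp only: mult.assoc)
        also have "\<dots> = \<bar>g1\<bar> * (Qq * (R*n + d*\<bar>y2\<bar>))" by (simp only: ident)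
        also have "\<dots> = Qq * (\<bar>g1\<bar> * (R*n + d*\<bar>y2\<bar>))" by (simp only: mult.left_commute)
        also have "\<dots> \<le> Qq * (\<bar>g2\<bar> * (d*y1 + L*n))"
          using mult_left_mono[OF B Qq0] .
        also have "\<dots> = (\<bar>g2\<bar> * Qq) * (d*y1 + L*n)" by (simp add: algebra_simps)
        finally show ?thesis .
      qed
      moreover have "d*y1 + L*n > 0" using d y1p L0 n0 by (simp add: add_pos_pos)
      ultimately have "\<bar>g1\<bar> * Pp \<le> \<bar>g2\<bar> * Qq"
        by (simp add: mult_le_cancel_right)
      moreover have "g1 * Pp = - (\<bar>g1\<bar> * Pp)" using g1n by simp
      ultimately show ?thesis unfolding Pp_def Qq_def by linarith
    qed
    have "g1*L*n - \<bar>g2\<bar>*R*n \<le> d*(g1*y1 - g2*y2)"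
    proof -
      have "g2*y2 \<le> \<bar>g2\<bar>*\<bar>y2\<bar>" by (metis abs_ge_self abs_mult)
      hence "d*(g2*y2) \<le> d*(\<bar>g2\<bar>*\<bar>y2\<bar>)" using d by simp
      note dle = this
      have "g1*L*n - \<bar>g2\<bar>*R*n = g1*(d*y1) - d*(\<bar>g2\<bar>*\<bar>y2\<bar>) - (g1 * (d*y1 - L*n) + \<bar>g2\<bar> * (R*n - d*\<bar>y2\<bar>))"
        by (simp add: algebra_simps)
      also have "\<dots> \<le> g1*(d*y1) - d*(\<bar>g2\<bar>*\<bar>y2\<bar>)" using key by simp
      also have "\<dots> \<le> g1*(d*y1) - d*(g2*y2)" using dle by simp
      also have "\<dots> = d*(g1*y1 - g2*y2)" by (simp add: algebra_simps)
      finally show ?thesis .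
    qed
    hence "(g1*L - \<bar>g2\<bar>*R) * n \<le> (g1*y1 - g2*y2) * d" by (simp add: algebra_simps)
    hence "(g1*L - \<bar>g2\<bar>*R)/d \<le> (g1*y1 - g2*y2)/n" using d n0
      by (simp add: field_simps)
    thus "(g1* v1 - g2* v2) / sqrt (v1^2+v2^2) \<le> (g1*y1 - g2*y2) / sqrt (y1^2+y2^2)"
      unfolding val n_def .
  qed
qed


lemma angle_ratio:
  fixes u v :: complex
  assumes "u \<noteq> 0" "v \<noteq> 0"
  shows "inner u v / (cmod u * cmod v) = Re (u / v) / cmod (u / v)"
proof -
  have nv: "cmod v > 0" "cmod u > 0" using assms by auto
  have e: "inner u v = (cmod v)^2 * Re (u / v)"
    using nv by (simp add: Re_divide inner_complex_def cmod_power2)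
  have "(cmod v)^2 * Re (u / v) / (cmod u * cmod v) = Re (u / v) * cmod v / cmod u"
    using nv by (simp add: power2_eq_square)
  moreover have "Re (u / v) / (cmod u / cmod v) = Re (u / v) * cmod v / cmod u" by simp
  ultimately show ?thesis unfolding e by (simp add: norm_divide)
qed

lemma circ_real:
  fixes a1 a2 b1 b2 z1 z2 c1 c2 r \<beta> :: real
  assumes "\<beta> = b1^2 + b2^2 - r^2" "\<beta> \<noteq> 0" "\<beta>*c1 = b1*a1 + b2*a2 - r^2" "\<beta>*c2 = b1*a2 - b2*a1"
  shows "(a1 - (z1*b1 - z2*b2))^2 + (a2 - (z1*b2 + z2*b1))^2 - r^2*((1 - z1)^2 + z2^2) =
     \<beta> * ((z1 - c1)^2 + (z2 - c2)^2 - ((c1^2 + c2^2) - (a1^2 + a2^2 - r^2)/\<beta>))"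
proof -
  have "\<beta> * ((z1 - c1)^2 + (z2 - c2)^2 - ((c1^2 + c2^2) - (a1^2 + a2^2 - r^2)/\<beta>))
     = \<beta>*(z1^2+z2^2) - 2*z1*(\<beta>*c1) - 2*z2*(\<beta>*c2) + (a1^2 + a2^2 - r^2)"
    using assms(2) by (simp add: field_simps power2_eq_square)
  also have "\<dots> = (a1 - (z1*b1 - z2*b2))^2 + (a2 - (z1*b2 + z2*b1))^2 - r^2*((1 - z1)^2 + z2^2)"
    by (simp only: assms(3,4)) (simp add: assms(1) algebra_simps power2_eq_square)
  finally show ?thesis by simp
qed

lemma circ_ident:
  fixes a b z c :: complex and r \<beta> :: real
  assumes "\<beta> = (cmod b)^2 - r^2" "\<beta> \<noteq> 0"
    and "c = (cnj b * a - of_real (r^2)) / of_real \<beta>"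
  shows "(cmod (a - z*b))^2 - r^2*(cmod (1 - z))^2 =
     \<beta> * ((cmod (z - c))^2 - ((cmod c)^2 - ((cmod a)^2 - r^2)/\<beta>))"
proof -
  have c1: "\<beta> * Re c = Re b * Re a + Im b * Im a - r^2" using assms(2,3) by simp
  have c2: "\<beta> * Im c = Re b * Im a - Im b * Re a" using assms(2,3) by simp
  have b: "\<beta> = (Re b)^2 + (Im b)^2 - r^2" using assms(1) by (simp add: cmod_power2)
  show ?thesis
    using circ_real[OF b assms(2) c1 c2, of "Re z" "Im z"]
    by (simp add: cmod_power2)
qed


lemma core_cplx:
  fixes d R :: real and g :: complex
  assumes d: "d > 0" and R: "0 \<le> R" "R < d" and g: "g \<noteq> 0"
    and mem: "d \<in> sqrt_closure S" "R \<in> sqrt_closure S" "CF S g"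
  shows "\<exists>v. cmod (v - of_real d) = R \<and> CF S v \<and>
     (\<forall>y. cmod (y - of_real d) = R \<longrightarrow> Re (g* v) / cmod v \<le> Re (g*y) / cmod y)"
proof -
  have g2: "(Re g)^2 + (Im g)^2 > 0" using g
    by (metis cmod_power2 zero_less_norm_iff zero_less_power)
  have circ: "cmod (y - of_real d) = R \<longleftrightarrow> (Re y - d)^2 + (Im y)^2 = R^2" for y
  proof -
    have "cmod (y - of_real d) = sqrt ((Re y - d)^2 + (Im y)^2)" by (simp add: cmod_def)
    thus ?thesis using R by (auto simp: real_sqrt_unique)
  qed
  have fv: "Re (g*y) / cmod y = (Re g * Re y - Im g * Im y) / sqrt ((Re y)^2 + (Im y)^2)" for y
    by (simp add: cmod_def)
  obtain v1 v2 where v: "(v1 - d)^2 + v2^2 = R^2" "v1 \<in> sqrt_closure S" "v2 \<in> sqrt_closure S"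
    "\<forall>y1 y2. (y1 - d)^2 + y2^2 = R^2 \<longrightarrow>
        (Re g * v1 - Im g * v2) / sqrt (v1^2+v2^2) \<le> (Re g*y1 - Im g*y2) / sqrt (y1^2+y2^2)"
    using core_real[OF d R g2 mem(1,2)] mem(3) unfolding CF_def by blast
  show ?thesis
  proof (intro exI[of _ "Complex v1 v2"] conjI allI impI)
    show "cmod (Complex v1 v2 - of_real d) = R" using circ v(1) by simp
    show "CF S (Complex v1 v2)" using v(2,3) by (simp add: CF_def)
    fix y assume "cmod (y - of_real d) = R"
    hence "(Re y - d)^2 + (Im y)^2 = R^2" using circ by simp
    thus "Re (g * Complex v1 v2) / cmod (Complex v1 v2) \<le> Re (g*y) / cmod y"
      unfolding fv using v(4) by simp
  qed
qed


lemma gW_bounds: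
  fixes w :: complex assumes "w \<noteq> 0"
  shows "-1 \<le> Re w / cmod w" "Re w / cmod w \<le> 1"
proof -
  have p: "cmod w > 0" using assms by simp
  have "\<bar>Re w\<bar> \<le> cmod w" by (rule abs_Re_le_cmod)
  thus "-1 \<le> Re w / cmod w" "Re w / cmod w \<le> 1" using p
    by (auto simp: divide_le_eq le_divide_eq abs_le_iff)
qed

lemma pangle_same:
  assumes "X \<noteq> A" shows "pangle A X A = 0"
proof -
  have "inner (A - X) (A - X) = (cmod (A - X))^2" by (simp add: power2_norm_eq_inner)
  moreover have "cmod (A - X) > 0" using assms by simp
  ultimately show ?thesis unfolding pangle_def by (simp add: power2_eq_square)
qed

lemma gW_transfer:
  fixes w c :: complex assumes "w \<noteq> 0" "c \<noteq> 0"
  shows "Re (c * (w * cnj c)) / cmod (w * cnj c) = cmod c * (Re w / cmod w)"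
proof -
  define n2 where "n2 = (cmod c)^2"
  have cc: "c * cnj c = of_real n2" unfolding n2_def by (rule complex_norm_square[symmetric])
  have e: "c * (w * cnj c) = w * of_real n2" using cc by (simp add: algebra_simps)
  have "Re (c * (w * cnj c)) = n2 * Re w" unfolding e by simp
  hence "Re (c * (w * cnj c)) = (cmod c)^2 * Re w" by (simp only: n2_def)
  moreover have "cmod (w * cnj c) = cmod w * cmod c" by (simp add: norm_mult)
  ultimately show ?thesis using assms by (simp add: power2_eq_square)
qed

theorem proposition2:
  fixes A B P :: complex and r :: real
  assumes "r > 0" and "dist A P > r" and "dist B P > r"
  shows "\<exists>Q. dist P Q = r
           \<and> (\<forall>X. dist P X = r \<longrightarrow> pangle A X B \<le> pangle A Q B)
           \<and> Re Q \<in> sqrt_closure {Re A, Im A, Re B, Im B, Re P, Im P, r}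
           \<and> Im Q \<in> sqrt_closure {Re A, Im A, Re B, Im B, Re P, Im P, r}"
proof -
  define F where "F = {Re A, Im A, Re B, Im B, Re P, Im P, r}"
  have CFA: "CF F A" "CF F B" "CF F P" unfolding CF_def F_def by (auto intro: sqrt_closure.base)
  have rF: "r \<in> sqrt_closure F" unfolding F_def by (auto intro: sqrt_closure.base)
  have XA: "X \<noteq> A" "X \<noteq> B" if "dist P X = r" for X
    using that assms by (auto simp: dist_commute)
  show ?thesis
  proof (cases "A = B")
    case True
    define Q where "Q = P + of_real r"
    have "dist P Q = r" using assms by (simp add: Q_def dist_norm)
    moreover have "\<forall>X. dist P X = r \<longrightarrow> pangle A X B \<le> pangle A Q B"
      using XA \<open>dist P Q = r\<close> True pangle_same by simp
    moreover have "CF F Q" unfolding Q_def using CFA rF by (intro CF_add CF_of_real) auto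
    ultimately show ?thesis unfolding CF_def F_def by blast
  next
    case False
    define a where "a = A - P"
    define b where "b = B - P"
    have CFab: "CF F a" "CF F b" unfolding a_def b_def using CFA by (auto intro: CF_diff)
    have ra: "cmod a > r" "cmod b > r" using assms by (auto simp: a_def b_def dist_norm)
    have ab: "a \<noteq> b" using False by (simp add: a_def b_def)
    define \<beta> where "\<beta> = (cmod b)^2 - r^2"
    have \<beta>0: "\<beta> > 0" unfolding \<beta>_def using ra assms by (simp add: power_strict_mono)
    have \<alpha>0: "(cmod a)^2 - r^2 > 0" using ra assms by (simp add: power_strict_mono)
    define c where "c = (cnj b * a - of_real (r^2)) / of_real \<beta>"
    define \<rho> where "\<rho> = (cmod c)^2 - ((cmod a)^2 - r^2)/\<beta>"
    have ident: "(cmod (a - z*b))^2 - r^2*(cmod (1 - z))^2 = \<beta> * ((cmod (z - c))^2 - \<rho>)" for z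
      using circ_ident[OF \<beta>_def _ c_def, of z] \<beta>0 unfolding \<rho>_def by simp
    define W where "W x = (a - x)/(b - x)" for x
    have Wp: "b - x \<noteq> 0 \<and> a - x \<noteq> 0 \<and> W x \<noteq> 0 \<and> (cmod (W x - c))^2 = \<rho>" if x: "cmod x = r" for x
    proof -
      have bx: "b - x \<noteq> 0" using ra x by auto
      have ax: "a - x \<noteq> 0" using ra x by auto
      have Wn: "W x \<noteq> 0" using ax bx by (simp add: W_def)
      have e1: "a - W x * b = x * (1 - W x)" using bx unfolding W_def
        by (simp add: field_simps)
      have "cmod (a - W x * b) = r * cmod (1 - W x)" unfolding e1 by (simp add: norm_mult x)
      hence "(cmod (a - W x * b))^2 - r^2*(cmod (1 - W x))^2 = 0" by (simp add: power_mult_distrib)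
      hence "\<beta> * ((cmod (W x - c))^2 - \<rho>) = 0" using ident by simp
      hence "(cmod (W x - c))^2 = \<rho>" using \<beta>0 by simp
      thus ?thesis using bx ax Wn by simp
    qed
    have \<rho>0: "\<rho> \<ge> 0" using Wp[of "of_real r"] assms by (metis norm_of_real abs_of_pos zero_le_power2)
    define d where "d = (cmod c)^2"
    have \<rho>d: "\<rho> < d" unfolding \<rho>_def d_def using \<alpha>0 \<beta>0 by simp
    have d0: "d > 0" using \<rho>0 \<rho>d by simp
    have c0: "c \<noteq> 0" using d0 by (auto simp: d_def)
    define R where "R = sqrt (d * \<rho>)"
    have R0: "0 \<le> R" using d0 \<rho>0 by (simp add: R_def)
    have Rd: "R < d"
    proof -
      have "d * \<rho> < d * d" using d0 \<rho>d by simp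
      hence "sqrt (d * \<rho>) < sqrt (d * d)" by (simp only: real_sqrt_less_iff)
      thus ?thesis using d0 by (simp add: R_def)
    qed
    have r2F: "r^2 \<in> sqrt_closure F" using rF by (rule sc_pow2)
    have \<beta>F: "\<beta> \<in> sqrt_closure F" unfolding \<beta>_def using CFab r2F by (intro sc_diff CF_cmod2) auto
    have CFc: "CF F c" unfolding c_def using CFab r2F \<beta>F
      by (intro CF_divide CF_diff CF_mult CF_cnj CF_of_real) auto
    have dF: "d \<in> sqrt_closure F" unfolding d_def using CFc by (rule CF_cmod2)
    have \<rho>F: "\<rho> \<in> sqrt_closure F" unfolding \<rho>_def using CFc CFab r2F \<beta>F
      by (intro sc_diff sc_divide CF_cmod2) auto
    have RF: "R \<in> sqrt_closure F" unfolding R_def using dF \<rho>F d0 \<rho>0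
      by (intro sqrt_closure.sqrt sqrt_closure.mult) auto
    obtain v where v: "cmod (v - of_real d) = R" "CF F v"
      "\<forall>y. cmod (y - of_real d) = R \<longrightarrow> Re (c * v) / cmod v \<le> Re (c * y) / cmod y"
      using core_cplx[OF d0 R0 Rd c0 dF RF CFc] by blast
    have ccnj: "c * cnj c = of_real d" unfolding d_def by (rule complex_norm_square[symmetric])
    have cd: "cmod c = sqrt d" unfolding d_def by simp
    define w0 where "w0 = v * c / of_real d"
    have vw: "v = w0 * cnj c" using d0 c0 unfolding w0_def by (simp add: ccnj[symmetric] field_simps)
    have transfer: "cmod (w * cnj c - of_real d) = cmod (w - c) * cmod c" for w
    proof -
      have "w * cnj c - of_real d = (w - c) * cnj c" using ccnj by (simp add: algebra_simps)
      thus ?thesis by (simp add: norm_mult)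
    qed
    have w0c: "(cmod (w0 - c))^2 = \<rho>"
    proof -
      have "cmod (w0 - c) * sqrt d = sqrt (d * \<rho>)" using v(1) transfer[of w0] vw cd R_def by simp
      hence "(cmod (w0 - c))^2 * d = d * \<rho>" using d0 \<rho>0
        by (metis power_mult_distrib real_sqrt_pow2 less_imp_le mult_nonneg_nonneg)
      thus ?thesis using d0 by simp
    qed
    have w01: "w0 \<noteq> 1"
    proof
      assume "w0 = 1"
      hence "(cmod (a - b))^2 = 0" using ident[of 1] w0c by simp
      thus False using ab by simp
    qed
    have w00: "w0 \<noteq> 0"
    proof
      assume "w0 = 0"
      thus False using w0c \<rho>d by (simp add: d_def)
    qed
    define x0 where "x0 = (a - w0 * b)/(1 - w0)"
    have w1: "1 - w0 \<noteq> 0" using w01 by simp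
    have x0r: "cmod x0 = r"
    proof -
      have "(cmod (a - w0 * b))^2 = (r * cmod (1 - w0))^2"
        using ident[of w0] w0c by (simp add: power_mult_distrib)
      hence "cmod (a - w0 * b) = r * cmod (1 - w0)" using assms(1)
        by (simp add: power2_eq_iff_nonneg)
      thus ?thesis using w1 by (simp add: x0_def norm_divide)
    qed
    have Wx0: "W x0 = w0"
    proof -
      have e1: "a - x0 = w0 * (b - a) / (1 - w0)" using w1 unfolding x0_def
        by (simp add: field_simps)
      have e2: "b - x0 = (b - a) / (1 - w0)" using w1 unfolding x0_def
        by (simp add: field_simps)
      have "b - a \<noteq> 0" using ab by simp
      thus ?thesis unfolding W_def e1 e2 using w1 by simp
    qed
    have pang: "pangle A (P + x) B = arccos (Re (W x) / cmod (W x))" if "cmod x = r" for x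
    proof -
      have e: "A - (P + x) = a - x" "B - (P + x) = b - x" by (simp_all add: a_def b_def)
      have n: "a - x \<noteq> 0" "b - x \<noteq> 0" using Wp[OF that] by auto
      show ?thesis unfolding pangle_def W_def e angle_ratio[OF n] ..
    qed
    define Q where "Q = P + x0"
    have "dist P Q = r" using x0r by (simp add: Q_def dist_norm)
    moreover have "\<forall>X. dist P X = r \<longrightarrow> pangle A X B \<le> pangle A Q B"
    proof (intro allI impI)
      fix X assume "dist P X = r"
      define x where "x = X - P"
      have xr: "cmod x = r" using \<open>dist P X = r\<close> by (simp add: x_def dist_norm norm_minus_commute)
      have X: "X = P + x" by (simp add: x_def)
      obtain Wn: "W x \<noteq> 0" and Wc: "(cmod (W x - c))^2 = \<rho>" using Wp[OF xr] by blast
      have "cmod (W x * cnj c - of_real d) = R"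
      proof -
        have "cmod (W x - c) = sqrt \<rho>" using Wc by (metis norm_ge_zero real_sqrt_unique)
        thus ?thesis unfolding transfer cd R_def by (simp add: real_sqrt_mult)
      qed
      hence "Re (c * v) / cmod v \<le> Re (c * (W x * cnj c)) / cmod (W x * cnj c)" using v(3) by blast
      hence "cmod c * (Re w0 / cmod w0) \<le> cmod c * (Re (W x) / cmod (W x))"
        unfolding vw gW_transfer[OF w00 c0] gW_transfer[OF Wn c0] .
      hence le: "Re w0 / cmod w0 \<le> Re (W x) / cmod (W x)" using mult_le_cancel_left_pos[of "cmod c"] c0 by (metis zero_less_norm_iff)
      have "arccos (Re (W x) / cmod (W x)) \<le> arccos (Re w0 / cmod w0)"
        by (rule arccos_le_arccos[OF gW_bounds(1)[OF w00] le gW_bounds(2)[OF Wn]])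
      thus "pangle A X B \<le> pangle A Q B" unfolding X Q_def pang[OF xr] pang[OF x0r] Wx0 .
    qed
    moreover have "CF F Q"
    proof -
      have "CF F w0" unfolding w0_def using v(2) CFc dF by (intro CF_divide CF_mult CF_of_real) auto
      hence "CF F x0" unfolding x0_def using CFab by (intro CF_divide CF_diff CF_mult CF_one) auto
      thus ?thesis unfolding Q_def using CFA by (intro CF_add) auto
    qed
    ultimately show ?thesis unfolding CF_def F_def by blast
  qed
qed

end
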